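(* Let $\mathcal A\subseteq E^\infty$, let $V,W\subseteq E$ be block subspaces with $W\subseteq^*V$, let $\vec v$ be a finite block sequence and let $T$ be a $(V,\vec v)$-rule. If player I has a strategy in $B^T_V(\vec v)$ to play in $\mathcal A$, then player I has a strategy in $B^T_W(\vec v)$ to play in $\mathcal A$.
   Context: Fix a countable field $\mathfrak F$ and let $E$ be the countable-dimensional $\mathfrak F$-vector space with basis $(e_n)$. For non-zero $x=\sum a_ne_n$, ${\rm supp}\,x=\{n:a_n\neq0\}$. A block sequence is a sequence of non-zero vectors with $\max{\rm supp}\,x_n<\min{\rm supp}\,x_{n+1}$. "Subspace" means an infinite-dimensional block subspace of $E$. For a subspace $X$, $X[k]=\{x\in X\setminus\{0\}:k<\min{\rm supp}\,x\}$; $W\subseteq^*V$ means $W[n]\subseteq V$ for some $n$. $E^\infty=E^{\mathbb N}$ with the product of discrete topologies; $E^{<\infty}$ is the set of finite block sequences; $\hat{}$ is concatenation; $T_{\vec x}=\{\vec y:\vec x\,\hat{}\,\vec y\in T\}$. Game $B_V(\vec v)$: if $|\vec v|$ is even: II plays a subspace $Z_0\subseteq V$; I plays non-zero $x_0\in Z_0$ and $n_0\in\mathbb N$; II plays non-zero $y_0\in V[n_0]$ and a subspace $Z_1\subseteq V$; I plays $x_1\in Z_1$, $n_1$; II plays $y_1\in V[n_1]$, $Z_2$; etc.; outcome $\vec v\,\hat{}\,(x_0,y_0,x_1,y_1,\dots)$. If $|\vec v|$ is odd: I plays $n_0$; II plays $y_0\in V[n_0]$ and $Z_0\subseteq V$;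 I plays $x_0\in Z_0$ and $n_1$; II plays $y_1\in V[n_1]$ and $Z_1$; etc.; outcome $\vec v\,\hat{}\,(y_0,x_0,y_1,x_1,\dots)$. A $(V,\vec v)$-rule is a set $T\subseteq E^{<\infty}$ with $\vec v\in T$ such that: (i) if $\vec y\in T$, $|\vec y|$ odd, then for every subspace $Z\subseteq V$ there is $z\in Z$ with $\vec y\,\hat{}\,z\in T$; (ii) if $\vec y\in T$, $|\vec y|$ even, then there is $n$ with $\vec y\,\hat{}\,z\in T$ for all $z\in V[n]$. The $T$-induced subgame $B^T_V(\vec v)$ is played as $B_V(\vec v)$ with the additional requirement that every position, i.e. the finite sequence of vectors played so far listed in the order they appear in the outcome, belongs to $T_{\vec v}$ (a player violating this loses). A strategy to play in $\mathcal A$ is one all of whose outcomes lie in $\mathcal A$. *)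

theory Defs
  imports Main "HOL-Library.Countable"
begin

text \<open>Vectors of E are finitely supported functions nat => field; e_n is the indicator of n.\<close>

type_synonym 'f bvec = "nat \<Rightarrow> 'f"

definition Evec :: "('f::field) bvec set" where
  "Evec = {x. finite {n. x n \<noteq> 0}}"

definition supp :: "('f::field) bvec \<Rightarrow> nat set" where
  "supp x = {n. x n \<noteq> 0}"

definition is_block_list :: "('f::field) bvec list \<Rightarrow> bool" where
  "is_block_list xs \<longleftrightarrow>
     (\<forall>x\<in>set xs. x \<in> Evec \<and> x \<noteq> (\<lambda>_. 0)) \<and>
     (\<forall>i. Suc i < length xs \<longrightarrow> Max (supp (xs ! i)) < Min (supp (xs ! Suc i)))"

definition is_block_seq :: "(nat \<Rightarrow> ('f::field) bvec) \<Rightarrow> bool" where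
  "is_block_seq b \<longleftrightarrow>
     (\<forall>i. b i \<in> Evec \<and> b i \<noteq> (\<lambda>_. 0)) \<and>
     (\<forall>i. Max (supp (b i)) < Min (supp (b (Suc i))))"

definition span_seq :: "(nat \<Rightarrow> ('f::field) bvec) \<Rightarrow> 'f bvec set" where
  "span_seq b = {x. \<exists>N c. x = (\<lambda>k. \<Sum>i<N. c i * b i k)}"

definition block_subspace :: "('f::field) bvec set \<Rightarrow> bool" where
  "block_subspace X \<longleftrightarrow> (\<exists>b. is_block_seq b \<and> X = span_seq b)"

definition tail_sub :: "('f::field) bvec set \<Rightarrow> nat \<Rightarrow> 'f bvec set" where
  "tail_sub X k = {x \<in> X. x \<noteq> (\<lambda>_. 0) \<and> k < Min (supp x)}"

definition almost_sub :: "('f::field) bvec set \<Rightarrow> 'f bvec set \<Rightarrow> bool" where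
  "almost_sub W V \<longleftrightarrow> (\<exists>n. tail_sub W n \<subseteq> V)"

definition is_rule :: "('f::field) bvec set \<Rightarrow> 'f bvec list \<Rightarrow> 'f bvec list set \<Rightarrow> bool" where
  "is_rule V v T \<longleftrightarrow>
     T \<subseteq> {xs. is_block_list xs} \<and> v \<in> T \<and>
     (\<forall>y\<in>T. odd (length y) \<longrightarrow>
        (\<forall>Z. block_subspace Z \<and> Z \<subseteq> V \<longrightarrow> (\<exists>z\<in>Z. y @ [z] \<in> T))) \<and>
     (\<forall>y\<in>T. even (length y) \<longrightarrow> (\<exists>n. \<forall>z\<in>tail_sub V n. y @ [z] \<in> T))"

text \<open>Strategies for player I: a map from the moves of II so far (the subspaces Z_j and
  vectors y_j played so far) to I's next move (x, n).\<close>
type_synonym 'f stratI = "'f bvec set list \<Rightarrow> 'f bvec list \<Rightarrow> 'f bvec \<times> nat"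

text \<open>Case |v| even. In round k, II has played Z_0..Z_k and y_0..y_{k-1}; I answers (x_k, n_k).
  Outcome: v @ (x_0, y_0, x_1, y_1, ...).\<close>
definition evI_x :: "'f stratI \<Rightarrow> (nat \<Rightarrow> 'f bvec set) \<Rightarrow> (nat \<Rightarrow> 'f bvec) \<Rightarrow> nat \<Rightarrow> 'f bvec" where
  "evI_x \<sigma> Zs ys k = fst (\<sigma> (map Zs [0..<Suc k]) (map ys [0..<k]))"

definition evI_n :: "'f stratI \<Rightarrow> (nat \<Rightarrow> 'f bvec set) \<Rightarrow> (nat \<Rightarrow> 'f bvec) \<Rightarrow> nat \<Rightarrow> nat" where
  "evI_n \<sigma> Zs ys k = snd (\<sigma> (map Zs [0..<Suc k]) (map ys [0..<k]))"

definition ev_out :: "'f bvec list \<Rightarrow> 'f stratI \<Rightarrow> (nat \<Rightarrow> 'f bvec set) \<Rightarrow> (nat \<Rightarrow> 'f bvec) \<Rightarrow> nat \<Rightarrow> 'f bvec" where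
  "ev_out v \<sigma> Zs ys i =
     (if i < length v then v ! i
      else if even (i - length v) then evI_x \<sigma> Zs ys ((i - length v) div 2)
      else ys ((i - length v) div 2))"

definition I_wins_even ::
  "('f::field) bvec set \<Rightarrow> 'f bvec list \<Rightarrow> 'f bvec list set \<Rightarrow> (nat \<Rightarrow> 'f bvec) set \<Rightarrow> 'f stratI \<Rightarrow> bool" where
  "I_wins_even V v T A \<sigma> \<longleftrightarrow>
     (\<forall>Zs ys.
       (let out = ev_out v \<sigma> Zs ys;
            Zok = (\<lambda>j. block_subspace (Zs j) \<and> Zs j \<subseteq> V);
            yok = (\<lambda>j. ys j \<in> tail_sub V (evI_n \<sigma> Zs ys j) \<and>
                       map out [0..<length v + 2 * j + 2] \<in> T);
            xok = (\<lambda>k. evI_x \<sigma> Zs ys k \<in> Zs k \<and> evI_x \<sigma> Zs ys k \<noteq> (\<lambda>_. 0) \<and>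
                       map out [0..<length v + 2 * k + 1] \<in> T)
        in (\<forall>k. (\<forall>j\<le>k. Zok j) \<and> (\<forall>j<k. yok j) \<longrightarrow> xok k) \<and>
           ((\<forall>j. Zok j \<and> yok j) \<longrightarrow> out \<in> A)))"

text \<open>Case |v| odd. In round k, II has played y_0..y_{k-1} and Z_0..Z_{k-1};
  I answers (x_{k-1}, n_k) (in round 0 only n_0 is used).
  Outcome: v @ (y_0, x_0, y_1, x_1, ...).\<close>
definition odI_x :: "'f stratI \<Rightarrow> (nat \<Rightarrow> 'f bvec set) \<Rightarrow> (nat \<Rightarrow> 'f bvec) \<Rightarrow> nat \<Rightarrow> 'f bvec" where
  "odI_x \<sigma> Zs ys k = fst (\<sigma> (map Zs [0..<Suc k]) (map ys [0..<Suc k]))"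

definition odI_n :: "'f stratI \<Rightarrow> (nat \<Rightarrow> 'f bvec set) \<Rightarrow> (nat \<Rightarrow> 'f bvec) \<Rightarrow> nat \<Rightarrow> nat" where
  "odI_n \<sigma> Zs ys k = snd (\<sigma> (map Zs [0..<k]) (map ys [0..<k]))"

definition od_out :: "'f bvec list \<Rightarrow> 'f stratI \<Rightarrow> (nat \<Rightarrow> 'f bvec set) \<Rightarrow> (nat \<Rightarrow> 'f bvec) \<Rightarrow> nat \<Rightarrow> 'f bvec" where
  "od_out v \<sigma> Zs ys i =
     (if i < length v then v ! i
      else if even (i - length v) then ys ((i - length v) div 2)
      else odI_x \<sigma> Zs ys ((i - length v) div 2))"

definition I_wins_odd ::
  "('f::field) bvec set \<Rightarrow> 'f bvec list \<Rightarrow> 'f bvec list set \<Rightarrow> (nat \<Rightarrow> 'f bvec) set \<Rightarrow> 'f stratI \<Rightarrow> bool" where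
  "I_wins_odd V v T A \<sigma> \<longleftrightarrow>
     (\<forall>Zs ys.
       (let out = od_out v \<sigma> Zs ys;
            IIok = (\<lambda>j. ys j \<in> tail_sub V (odI_n \<sigma> Zs ys j) \<and>
                        block_subspace (Zs j) \<and> Zs j \<subseteq> V \<and>
                        map out [0..<length v + 2 * j + 1] \<in> T);
            xok = (\<lambda>k. odI_x \<sigma> Zs ys k \<in> Zs k \<and> odI_x \<sigma> Zs ys k \<noteq> (\<lambda>_. 0) \<and>
                       map out [0..<length v + 2 * k + 2] \<in> T)
        in (\<forall>k. (\<forall>j\<le>k. IIok j) \<longrightarrow> xok k) \<and>
           ((\<forall>j. IIok j) \<longrightarrow> out \<in> A)))"

definition I_has_strategy ::
  "('f::field) bvec set \<Rightarrow> 'f bvec list \<Rightarrow> 'f bvec list set \<Rightarrow> (nat \<Rightarrow> 'f bvec) set \<Rightarrow> bool" where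
  "I_has_strategy V v T A \<longleftrightarrow>
     (\<exists>\<sigma>. if even (length v) then I_wins_even V v T A \<sigma> else I_wins_odd V v T A \<sigma>)"

end

theory Submission imports Defs begin

lemma bs_min_ge:
  assumes "is_block_seq (b :: nat \<Rightarrow> ('f::field) bvec)" shows "i \<le> Min (supp (b i))"
proof (induction i)
  case 0 then show ?case by simp
next
  case (Suc i)
  have fin: "finite (supp (b i))" and ne: "supp (b i) \<noteq> {}"
    using assms unfolding is_block_seq_def Evec_def supp_def by (auto simp: fun_eq_iff)
  have "Min (supp (b i)) \<le> Max (supp (b i))" using fin ne by (meson Max_ge Min_in)
  moreover have "Max (supp (b i)) < Min (supp (b (Suc i)))" using assms unfolding is_block_seq_def by blast
  ultimately show ?case using Suc by linarith
qed

lemma bs_zero: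
  assumes "is_block_seq (b :: nat \<Rightarrow> ('f::field) bvec)" "k < j" shows "b j k = 0"
proof (rule ccontr)
  assume "b j k \<noteq> 0"
  hence "k \<in> supp (b j)" by (simp add: supp_def)
  moreover have "finite (supp (b j))" using assms unfolding is_block_seq_def Evec_def supp_def by auto
  ultimately have "Min (supp (b j)) \<le> k" by simp
  with bs_min_ge[OF assms(1), of j] assms(2) show False by linarith
qed

lemma span_shift:
  assumes "x \<in> span_seq (\<lambda>i. b (i + K))" shows "x \<in> span_seq (b :: nat \<Rightarrow> ('f::field) bvec)"
proof -
  obtain N c where x: "x = (\<lambda>k. \<Sum>i<N. c i * b (i + K) k)" using assms unfolding span_seq_def by blast
  define c' where "c' i = (if K \<le> i then c (i - K) else 0)" for i
  have "\<And>k. (\<Sum>i<N + K. c' i * b i k) = (\<Sum>i<N. c i * b (i + K) k)"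
  proof -
    fix k show "(\<Sum>i<N + K. c' i * b i k) = (\<Sum>i<N. c i * b (i + K) k)"
      by (induction N) (auto simp: c'_def add.commute)
  qed
  then show ?thesis unfolding span_seq_def x by (intro CollectI exI[of _ "N+K"] exI[of _ c']) auto
qed

lemma span_Evec:
  assumes "\<And>i. b i \<in> Evec" "x \<in> span_seq (b :: nat \<Rightarrow> ('f::field) bvec)" shows "x \<in> Evec"
proof -
  obtain N c where x: "x = (\<lambda>k. \<Sum>i<N. c i * b i k)" using assms unfolding span_seq_def by blast
  have "{k. x k \<noteq> 0} \<subseteq> (\<Union>i<N. {k. b i k \<noteq> 0})"
  proof
    fix k assume "k \<in> {k. x k \<noteq> 0}"
    then have "(\<Sum>i<N. c i * b i k) \<noteq> 0" by (simp add: x)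
    then obtain i where "i < N" "c i * b i k \<noteq> 0" by (meson lessThan_iff sum.neutral)
    then show "k \<in> (\<Union>i<N. {k. b i k \<noteq> 0})" by auto
  qed
  moreover have "finite (\<Union>i<N. {k. b i k \<noteq> 0})" using assms(1) unfolding Evec_def by auto
  ultimately show ?thesis unfolding Evec_def by (auto intro: finite_subset)
qed

lemma sub_exists:
  assumes "block_subspace (Z :: ('f::field) bvec set)" "Z \<subseteq> W" "tail_sub W n0 \<subseteq> V" "block_subspace V"
  shows "\<exists>Z'. block_subspace Z' \<and> Z' \<subseteq> Z \<and> Z' \<subseteq> V"
proof -
  obtain b where b: "is_block_seq b" "Z = span_seq b" using assms(1) unfolding block_subspace_def by blast
  define b' where "b' i = b (i + Suc n0)" for i
  have b': "is_block_seq b'" using b(1) unfolding is_block_seq_def b'_def by auto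
  have sub: "span_seq b' \<subseteq> Z" using span_shift[of _ b "Suc n0"] b(2) unfolding b'_def by blast
  have zV: "(\<lambda>_. 0) \<in> V" using assms(4) unfolding block_subspace_def span_seq_def
    by (auto intro!: exI[of _ 0])
  have "span_seq b' \<subseteq> V"
  proof
    fix x assume xs: "x \<in> span_seq b'"
    show "x \<in> V"
    proof (cases "x = (\<lambda>_. 0)")
      case True then show ?thesis using zV by simp
    next
      case False
      obtain N c where x: "x = (\<lambda>k. \<Sum>i<N. c i * b' i k)" using xs unfolding span_seq_def by blast
      have z: "x k = 0" if "k \<le> n0" for k
        using bs_zero[OF b(1), of k] that unfolding x b'_def by simp
      have ev: "x \<in> Evec" using span_Evec[OF _ xs] b' unfolding is_block_seq_def by blast
      have fin: "finite (supp x)" using ev unfolding Evec_def supp_def by simp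
      have ne: "supp x \<noteq> {}" using False unfolding supp_def by auto
      have "Min (supp x) \<in> supp x" using Min_in[OF fin ne] .
      then have "n0 < Min (supp x)" using z unfolding supp_def by (meson mem_Collect_eq not_le)
      then have "x \<in> tail_sub W n0" using False sub xs assms(2) unfolding tail_sub_def by auto
      then show ?thesis using assms(3) by blast
    qed
  qed
  then show ?thesis using b' sub unfolding block_subspace_def by blast
qed

lemma tail_transfer:
  assumes "tail_sub W n0 \<subseteq> V" "y \<in> tail_sub W (n + n0)" shows "y \<in> tail_sub V n"
proof -
  have "y \<in> tail_sub W n0" using assms(2) unfolding tail_sub_def by auto
  then show ?thesis using assms unfolding tail_sub_def by auto
qed

theorem mainTheorem4:
  fixes A :: "(nat \<Rightarrow> ('f::{field,countable}) bvec) set"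
    and V W :: "'f bvec set" and v :: "'f bvec list" and T :: "'f bvec list set"
  assumes "A \<subseteq> {s. \<forall>i. s i \<in> Evec}"
    and "block_subspace V" and "block_subspace W" and "almost_sub W V"
    and "is_block_list v"
    and "is_rule V v T"
    and "I_has_strategy V v T A"
  shows "I_has_strategy W v T A"
proof -
  obtain \<sigma> where hyp: "if even (length v) then I_wins_even V v T A \<sigma> else I_wins_odd V v T A \<sigma>"
    using assms(7) unfolding I_has_strategy_def by blast
  obtain n0 where n0: "tail_sub W n0 \<subseteq> V" using assms(4) unfolding almost_sub_def by blast
  define f where "f Z = (SOME Z'. block_subspace Z' \<and> Z' \<subseteq> Z \<and> Z' \<subseteq> V)" for Z :: "'f bvec set"
  have fZ: "block_subspace (f Z) \<and> f Z \<subseteq> Z \<and> f Z \<subseteq> V" if "block_subspace Z" "Z \<subseteq> W" for Z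
    unfolding f_def by (rule someI_ex, rule sub_exists[OF that n0 assms(2)])
  define \<sigma>' :: "'f stratI" where "\<sigma>' Zl yl = (fst (\<sigma> (map f Zl) yl), snd (\<sigma> (map f Zl) yl) + n0)" for Zl yl
  have ex: "evI_x \<sigma>' Zs ys k = evI_x \<sigma> (f \<circ> Zs) ys k" for Zs ys k
    unfolding evI_x_def \<sigma>'_def by simp
  have en: "evI_n \<sigma>' Zs ys k = evI_n \<sigma> (f \<circ> Zs) ys k + n0" for Zs ys k
    unfolding evI_n_def \<sigma>'_def by simp
  have eo: "ev_out v \<sigma>' Zs ys = ev_out v \<sigma> (f \<circ> Zs) ys" for Zs ys
    unfolding ev_out_def ex by simp
  have ox: "odI_x \<sigma>' Zs ys k = odI_x \<sigma> (f \<circ> Zs) ys k" for Zs ys k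
    unfolding odI_x_def \<sigma>'_def by simp
  have on: "odI_n \<sigma>' Zs ys k = odI_n \<sigma> (f \<circ> Zs) ys k + n0" for Zs ys k
    unfolding odI_n_def \<sigma>'_def by simp
  have oo: "od_out v \<sigma>' Zs ys = od_out v \<sigma> (f \<circ> Zs) ys" for Zs ys
    unfolding od_out_def ox by simp
  show ?thesis
  proof (cases "even (length v)")
    case True
    have H: "I_wins_even V v T A \<sigma>" using hyp True by simp
    have "I_wins_even W v T A \<sigma>'"
      unfolding I_wins_even_def Let_def eo ex en
    proof (intro allI conjI impI)
      fix Zs :: "nat \<Rightarrow> 'f bvec set" and ys :: "nat \<Rightarrow> 'f bvec"
      define Zs' where "Zs' = f \<circ> Zs"
      have H1: "\<forall>k. (\<forall>j\<le>k. block_subspace (Zs' j) \<and> Zs' j \<subseteq> V) \<and>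
          (\<forall>j<k. ys j \<in> tail_sub V (evI_n \<sigma> Zs' ys j) \<and>
             map (ev_out v \<sigma> Zs' ys) [0..<length v + 2 * j + 2] \<in> T) \<longrightarrow>
          evI_x \<sigma> Zs' ys k \<in> Zs' k \<and> evI_x \<sigma> Zs' ys k \<noteq> (\<lambda>_. 0) \<and>
          map (ev_out v \<sigma> Zs' ys) [0..<length v + 2 * k + 1] \<in> T"
        and H2: "(\<forall>j. (block_subspace (Zs' j) \<and> Zs' j \<subseteq> V) \<and>
          (ys j \<in> tail_sub V (evI_n \<sigma> Zs' ys j) \<and>
             map (ev_out v \<sigma> Zs' ys) [0..<length v + 2 * j + 2] \<in> T)) \<longrightarrow>
          ev_out v \<sigma> Zs' ys \<in> A"
        using H unfolding I_wins_even_def Let_def by blast+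
      {
        fix k
        assume a: "(\<forall>j\<le>k. block_subspace (Zs j) \<and> Zs j \<subseteq> W) \<and>
          (\<forall>j<k. ys j \<in> tail_sub W (evI_n \<sigma> (f \<circ> Zs) ys j + n0) \<and>
             map (ev_out v \<sigma> (f \<circ> Zs) ys) [0..<length v + 2 * j + 2] \<in> T)"
        have "(\<forall>j\<le>k. block_subspace (Zs' j) \<and> Zs' j \<subseteq> V) \<and>
          (\<forall>j<k. ys j \<in> tail_sub V (evI_n \<sigma> Zs' ys j) \<and>
             map (ev_out v \<sigma> Zs' ys) [0..<length v + 2 * j + 2] \<in> T)"
          using a fZ tail_transfer[OF n0] unfolding Zs'_def by auto
        with H1 have r: "evI_x \<sigma> Zs' ys k \<in> Zs' k \<and> evI_x \<sigma> Zs' ys k \<noteq> (\<lambda>_. 0) \<and>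
          map (ev_out v \<sigma> Zs' ys) [0..<length v + 2 * k + 1] \<in> T" by blast
        have "Zs' k \<subseteq> Zs k" using a fZ unfolding Zs'_def by auto
        with r have "evI_x \<sigma> (f \<circ> Zs) ys k \<in> Zs k" "evI_x \<sigma> (f \<circ> Zs) ys k \<noteq> (\<lambda>_. 0)"
          "map (ev_out v \<sigma> (f \<circ> Zs) ys) [0..<length v + 2 * k + 1] \<in> T"
          unfolding Zs'_def by auto
      } note K = this
      fix k
      assume a: "(\<forall>j\<le>k. block_subspace (Zs j) \<and> Zs j \<subseteq> W) \<and>
          (\<forall>j<k. ys j \<in> tail_sub W (evI_n \<sigma> (f \<circ> Zs) ys j + n0) \<and>
             map (ev_out v \<sigma> (f \<circ> Zs) ys) [0..<length v + 2 * j + 2] \<in> T)"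
      show "evI_x \<sigma> (f \<circ> Zs) ys k \<in> Zs k" using K(1)[OF a] .
      show "evI_x \<sigma> (f \<circ> Zs) ys k \<noteq> (\<lambda>_. 0)" using K(2)[OF a] .
      show "map (ev_out v \<sigma> (f \<circ> Zs) ys) [0..<length v + 2 * k + 1] \<in> T" using K(3)[OF a] .
    next
      fix Zs :: "nat \<Rightarrow> 'f bvec set" and ys :: "nat \<Rightarrow> 'f bvec"
      define Zs' where "Zs' = f \<circ> Zs"
      have H2: "(\<forall>j. (block_subspace (Zs' j) \<and> Zs' j \<subseteq> V) \<and>
          (ys j \<in> tail_sub V (evI_n \<sigma> Zs' ys j) \<and>
             map (ev_out v \<sigma> Zs' ys) [0..<length v + 2 * j + 2] \<in> T)) \<longrightarrow>
          ev_out v \<sigma> Zs' ys \<in> A"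
        using H unfolding I_wins_even_def Let_def by blast
      assume a: "\<forall>j. (block_subspace (Zs j) \<and> Zs j \<subseteq> W) \<and>
          (ys j \<in> tail_sub W (evI_n \<sigma> (f \<circ> Zs) ys j + n0) \<and>
             map (ev_out v \<sigma> (f \<circ> Zs) ys) [0..<length v + 2 * j + 2] \<in> T)"
      have "\<forall>j. (block_subspace (Zs' j) \<and> Zs' j \<subseteq> V) \<and>
          (ys j \<in> tail_sub V (evI_n \<sigma> Zs' ys j) \<and>
             map (ev_out v \<sigma> Zs' ys) [0..<length v + 2 * j + 2] \<in> T)"
        using a fZ tail_transfer[OF n0] unfolding Zs'_def by auto
      with H2 show "ev_out v \<sigma> (f \<circ> Zs) ys \<in> A" unfolding Zs'_def by blast
    qed
    then show ?thesis using True unfolding I_has_strategy_def by auto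
  next
    case False
    have H: "I_wins_odd V v T A \<sigma>" using hyp False by simp
    have "I_wins_odd W v T A \<sigma>'"
      unfolding I_wins_odd_def Let_def oo ox on
    proof (intro allI conjI impI)
      fix Zs :: "nat \<Rightarrow> 'f bvec set" and ys :: "nat \<Rightarrow> 'f bvec"
      define Zs' where "Zs' = f \<circ> Zs"
      have H1: "\<forall>k. (\<forall>j\<le>k. ys j \<in> tail_sub V (odI_n \<sigma> Zs' ys j) \<and>
                        block_subspace (Zs' j) \<and> Zs' j \<subseteq> V \<and>
                        map (od_out v \<sigma> Zs' ys) [0..<length v + 2 * j + 1] \<in> T) \<longrightarrow>
          odI_x \<sigma> Zs' ys k \<in> Zs' k \<and> odI_x \<sigma> Zs' ys k \<noteq> (\<lambda>_. 0) \<and>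
          map (od_out v \<sigma> Zs' ys) [0..<length v + 2 * k + 2] \<in> T"
        using H unfolding I_wins_odd_def Let_def by blast
      fix k
      assume a: "\<forall>j\<le>k. ys j \<in> tail_sub W (odI_n \<sigma> (f \<circ> Zs) ys j + n0) \<and>
                        block_subspace (Zs j) \<and> Zs j \<subseteq> W \<and>
                        map (od_out v \<sigma> (f \<circ> Zs) ys) [0..<length v + 2 * j + 1] \<in> T"
      have "\<forall>j\<le>k. ys j \<in> tail_sub V (odI_n \<sigma> Zs' ys j) \<and>
                        block_subspace (Zs' j) \<and> Zs' j \<subseteq> V \<and>
                        map (od_out v \<sigma> Zs' ys) [0..<length v + 2 * j + 1] \<in> T"
        using a fZ tail_transfer[OF n0] unfolding Zs'_def by auto
      with H1 have r: "odI_x \<sigma> Zs' ys k \<in> Zs' k \<and> odI_x \<sigma> Zs' ys k \<noteq> (\<lambda>_. 0) \<and>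
          map (od_out v \<sigma> Zs' ys) [0..<length v + 2 * k + 2] \<in> T" by blast
      have "Zs' k \<subseteq> Zs k" using a fZ unfolding Zs'_def by auto
      with r show "odI_x \<sigma> (f \<circ> Zs) ys k \<in> Zs k" "odI_x \<sigma> (f \<circ> Zs) ys k \<noteq> (\<lambda>_. 0)"
          "map (od_out v \<sigma> (f \<circ> Zs) ys) [0..<length v + 2 * k + 2] \<in> T"
        unfolding Zs'_def by auto
    next
      fix Zs :: "nat \<Rightarrow> 'f bvec set" and ys :: "nat \<Rightarrow> 'f bvec"
      define Zs' where "Zs' = f \<circ> Zs"
      have H2: "(\<forall>j. ys j \<in> tail_sub V (odI_n \<sigma> Zs' ys j) \<and>
                        block_subspace (Zs' j) \<and> Zs' j \<subseteq> V \<and>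
                        map (od_out v \<sigma> Zs' ys) [0..<length v + 2 * j + 1] \<in> T) \<longrightarrow>
          od_out v \<sigma> Zs' ys \<in> A"
        using H unfolding I_wins_odd_def Let_def by blast
      assume a: "\<forall>j. ys j \<in> tail_sub W (odI_n \<sigma> (f \<circ> Zs) ys j + n0) \<and>
                        block_subspace (Zs j) \<and> Zs j \<subseteq> W \<and>
                        map (od_out v \<sigma> (f \<circ> Zs) ys) [0..<length v + 2 * j + 1] \<in> T"
      have "\<forall>j. ys j \<in> tail_sub V (odI_n \<sigma> Zs' ys j) \<and>
                        block_subspace (Zs' j) \<and> Zs' j \<subseteq> V \<and>
                        map (od_out v \<sigma> Zs' ys) [0..<length v + 2 * j + 1] \<in> T"
        using a fZ tail_transfer[OF n0] unfolding Zs'_def by auto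
      with H2 show "od_out v \<sigma> (f \<circ> Zs) ys \<in> A" unfolding Zs'_def by blast
    qed
    then show ?thesis using False unfolding I_has_strategy_def by auto
  qed
qed

end
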